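(* Let $A,B\in\mathbb{R}^{n\times n}$ be symmetric, $a,b\in\mathbb{R}^n$, $c,d\in\mathbb{R}$, $\alpha\le\beta$ real, $f(x)=x^TAx+2a^Tx+c$, $h(x)=x^TBx+2b^Tx+d$. Suppose $B\neq 0$ and there exist $\widehat{x}\in\mathbb{R}^n$ and a symmetric $\widehat{X}$ with $\widehat{X}-\widehat{x}\widehat{x}^T$ positive definite and $\alpha<B\bullet\widehat{X}+2b^T\widehat{x}+d<\beta$. Then the problem $\inf\{f(x): \alpha\le h(x)\le\beta\}$ is bounded below (i.e. has optimal value $>-\infty$) if and only if there exist $\mu,s\in\mathbb{R}$ with $\begin{bmatrix}A+\mu B & a+\mu b\\ a^T+\mu b^T & s\end{bmatrix}\succeq 0$ (i.e. the Lagrangian dual problem $\sup\{c+\mu d-\mu_-\beta+\mu_+\alpha-s : \mu,s\in\mathbb{R},\ \begin{bmatrix}A+\mu B & a+\mu b\\ a^T+\mu b^T & s\end{bmatrix}\succeq 0\}$, with $\mu_+=\max\{\mu,0\}$, $\mu_-=-\min\{\mu,0\}$, is feasible).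
   Context: $M\succeq 0$ means $M$ is positive semidefinite; $M\bullet N=\sum_{i,j}m_{ij}n_{ij}$. *)

theory Defs
  imports "HOL-Analysis.Analysis"
begin

definition symmetric_mat :: "real^'n^'n \<Rightarrow> bool" where
  "symmetric_mat M \<longleftrightarrow> transpose M = M"

definition psd :: "real^'m^'m \<Rightarrow> bool" where
  "psd M \<longleftrightarrow> symmetric_mat M \<and> (\<forall>x. 0 \<le> x \<bullet> (M *v x))"

definition pd :: "real^'m^'m \<Rightarrow> bool" where
  "pd M \<longleftrightarrow> symmetric_mat M \<and> (\<forall>x. x \<noteq> 0 \<longrightarrow> 0 < x \<bullet> (M *v x))"

definition frob :: "real^'n^'n \<Rightarrow> real^'n^'n \<Rightarrow> real" where
  "frob M N = (\<Sum>i\<in>UNIV. \<Sum>j\<in>UNIV. M $ i $ j * N $ i $ j)"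

definition outer :: "real^'n \<Rightarrow> real^'n \<Rightarrow> real^'n^'n" where
  "outer x y = (\<chi> i j. x $ i * y $ j)"

text \<open>The (n+1)x(n+1) block matrix [[M, v],[v^T, s]], index None = the extra last row/column.\<close>
definition block_mat :: "real^'n^'n \<Rightarrow> real^'n \<Rightarrow> real \<Rightarrow> real^('n option)^('n option)" where
  "block_mat M v s = (\<chi> i j. case (i, j) of
      (Some i', Some j') \<Rightarrow> M $ i' $ j'
    | (Some i', None) \<Rightarrow> v $ i'
    | (None, Some j') \<Rightarrow> v $ j'
    | (None, None) \<Rightarrow> s)"

end

theory Submission
  imports Defs
begin


definition Q :: "real^'n^'n \<Rightarrow> real^'n \<Rightarrow> real \<Rightarrow> real^'n \<Rightarrow> real" where
  "Q M m c0 x = x \<bullet> (M *v x) + 2 * (m \<bullet> x) + c0"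

lemma Q_expand:
  "Q M m c0 (x + s *\<^sub>R D) = Q M m c0 x + s * (D \<bullet> (M *v x) + x \<bullet> (M *v D) + 2 * (m \<bullet> D)) + s^2 * (D \<bullet> (M *v D))"
  unfolding Q_def by (simp add: algebra_simps inner_add_left inner_add_right power2_eq_square)

lemma root1d:
  fixes H2 \<beta> \<gamma> k :: real
  assumes "H2 \<noteq> 0" "H2 * \<gamma> \<le> 0"
  shows "\<exists>u. H2*u^2 + \<beta>*u + \<gamma> = 0 \<and> k*u \<le> 0"
proof -
  define D where "D = \<beta>^2 - 4*H2*\<gamma>"
  have D0: "D \<ge> 0" using assms zero_le_power2[of \<beta>] unfolding D_def by linarith
  define u1 where "u1 = (-\<beta> + sqrt D)/(2*H2)"
  define u2 where "u2 = (-\<beta> - sqrt D)/(2*H2)"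
  have sq: "sqrt D ^2 = D" using D0 by simp
  have r1: "H2*u1^2 + \<beta>*u1 + \<gamma> = 0"
  proof -
    have "4*H2*(H2*u1^2 + \<beta>*u1 + \<gamma>) = sqrt D^2 - \<beta>^2 + 4*H2*\<gamma>"
      unfolding u1_def using assms(1) by (simp add: field_simps power2_eq_square)
    then show ?thesis using sq assms(1) unfolding D_def by simp
  qed
  have r2: "H2*u2^2 + \<beta>*u2 + \<gamma> = 0"
  proof -
    have "4*H2*(H2*u2^2 + \<beta>*u2 + \<gamma>) = sqrt D^2 - \<beta>^2 + 4*H2*\<gamma>"
      unfolding u2_def using assms(1) by (simp add: field_simps power2_eq_square)
    then show ?thesis using sq assms(1) unfolding D_def by simp
  qed
  have prod: "u1 * u2 = \<gamma> / H2"
  proof -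
    have "4*H2*H2*(u1 * u2) = \<beta>^2 - sqrt D^2"
      unfolding u1_def u2_def using assms(1) by (simp add: field_simps power2_eq_square)
    then have "4*H2*H2*(u1 * u2) = 4*H2*\<gamma>" using sq unfolding D_def by simp
    then show ?thesis using assms(1) by (simp add: field_simps)
  qed
  have "\<gamma> / H2 = (H2*\<gamma>)/(H2^2)" using assms(1) by (simp add: power2_eq_square)
  then have g: "\<gamma> / H2 \<le> 0" using assms(2) by (simp add: divide_nonpos_nonneg)
  have "(k*u1)*(k*u2) = k^2 * (u1*u2)" by (simp add: algebra_simps power2_eq_square)
  also have "\<dots> \<le> 0" by (rule mult_nonneg_nonpos) (use g prod in auto)
  finally have kk: "(k*u1)*(k*u2) \<le> 0" .
  have "k*u1 \<le> 0 \<or> k*u2 \<le> 0"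
  proof (rule ccontr)
    assume "\<not> ?thesis"
    then have "k*u1 > 0" "k*u2 > 0" by auto
    then have "(k*u1)*(k*u2) > 0" by (rule mult_pos_pos)
    then show False using kk by linarith
  qed
  then show ?thesis using r1 r2 by blast
qed



lemma exact_conv:
  assumes t: "0 \<le> t" "t \<le> 1"
    and cas: "(y-x) \<bullet> (B *v (y-x)) \<noteq> 0 \<or> (y-x) \<bullet> (A *v (y-x)) \<ge> 0"
  shows "\<exists>z. Q B b d z = (1-t) * Q B b d x + t * Q B b d y \<and> Q A a c z \<le> (1-t) * Q A a c x + t * Q A a c y"
proof -
  define D where "D = y - x"
  have y: "y = x + 1 *\<^sub>R D" unfolding D_def by simp
  define F0 where "F0 = Q A a c x"
  define F1 where "F1 = D \<bullet> (A *v x) + x \<bullet> (A *v D) + 2 * (a \<bullet> D)"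
  define F2 where "F2 = D \<bullet> (A *v D)"
  define H0 where "H0 = Q B b d x"
  define H1 where "H1 = D \<bullet> (B *v x) + x \<bullet> (B *v D) + 2 * (b \<bullet> D)"
  define H2 where "H2 = D \<bullet> (B *v D)"
  have QF: "\<And>s. Q A a c (x + s *\<^sub>R D) = F0 + s*F1 + s^2*F2"
    unfolding F0_def F1_def F2_def by (rule Q_expand)
  have QH: "\<And>s. Q B b d (x + s *\<^sub>R D) = H0 + s*H1 + s^2*H2"
    unfolding H0_def H1_def H2_def by (rule Q_expand)
  have Fy: "Q A a c y = F0 + F1 + F2" using QF[of 1] y by simp
  have Hy: "Q B b d y = H0 + H1 + H2" using QH[of 1] y by simp
  have tt: "t^2 \<le> t" using t by (simp add: power2_eq_square mult_le_cancel_right1 mult_left_le)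
  show ?thesis
  proof (cases "H2 = 0")
    case False
    have "(H2*H2) * (t^2-t) \<le> 0" using tt by (intro mult_nonneg_nonpos) auto
    then have "H2 * (H2*(t^2-t)) \<le> 0" by (simp add: mult.assoc)
    then obtain u where u: "H2*u^2 + (H1 + 2*H2*t)*u + H2*(t^2-t) = 0" "(F1 - F2*H1/H2)*u \<le> 0"
      using root1d[OF False] by blast
    have e1: "H0 + (t+u)*H1 + (t+u)^2*H2 = (1-t)*H0 + t*(H0+H1+H2)"
      using u(1) by (simp add: algebra_simps power2_eq_square)
    have usq: "u^2 + 2*t*u + t^2 - t = -(H1/H2)*u"
      using u(1) False by (simp add: field_simps power2_eq_square)
    have "F0 + (t+u)*F1 + (t+u)^2*F2 = F0 + t*(F1+F2) + (u*F1 + F2*(u^2 + 2*t*u + t^2 - t))"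
      by (simp add: algebra_simps power2_eq_square)
    also have "\<dots> = F0 + t*(F1+F2) + (F1 - F2*H1/H2)*u"
    proof -
      have "F2*(u^2 + 2*t*u + t^2 - t) = -(F2*H1/H2)*u" using usq by simp
      then show ?thesis by (simp add: algebra_simps)
    qed
    also have "\<dots> \<le> (1-t)*F0 + t*(F0+F1+F2)" using u(2) by (simp add: algebra_simps)
    finally have e2: "F0 + (t+u)*F1 + (t+u)^2*F2 \<le> (1-t)*F0 + t*(F0+F1+F2)" .
    have z1: "Q B b d (x + (t+u) *\<^sub>R D) = (1-t)*Q B b d x + t*Q B b d y"
      unfolding QH Hy H0_def[symmetric] using e1 by linarith
    have z2: "Q A a c (x + (t+u) *\<^sub>R D) \<le> (1-t)*Q A a c x + t*Q A a c y"
      unfolding QF Fy F0_def[symmetric] using e2 by linarith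
    show ?thesis by (intro exI[of _ "x + (t+u) *\<^sub>R D"] conjI z1 z2)
  next
    case True
    then have F2: "F2 \<ge> 0" using cas unfolding F2_def H2_def D_def by auto
    have e1: "H0 + t*H1 + t^2*H2 = (1-t)*H0 + t*(H0+H1+H2)" using True by (simp add: algebra_simps)
    have "t^2*F2 \<le> t*F2" using tt F2 by (simp add: mult_right_mono)
    then have "F0 + t*F1 + t^2*F2 \<le> (1-t)*F0 + t*(F0+F1+F2)" by (simp add: algebra_simps)
    then have z2: "Q A a c (x + t *\<^sub>R D) \<le> (1-t)*Q A a c x + t*Q A a c y"
      unfolding QF Fy F0_def[symmetric] by linarith
    have z1: "Q B b d (x + t *\<^sub>R D) = (1-t)*Q B b d x + t*Q B b d y"
      unfolding QH Hy H0_def[symmetric] using e1 by linarith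
    show ?thesis by (intro exI[of _ "x + t *\<^sub>R D"] conjI z1 z2)
  qed
qed



lemma sym_inner:
  assumes "symmetric_mat B"
  shows "u \<bullet> (B *v v) = v \<bullet> (B *v u)"
proof -
  have "u v* B = B *v u" using vector_transpose_matrix[of u B] assms
    unfolding symmetric_mat_def by simp
  then show ?thesis using dot_lmul_matrix[of u B v] by (simp add: inner_commute)
qed

lemma exists_w:
  assumes "symmetric_mat B" "B \<noteq> 0"
  shows "\<exists>w. w \<bullet> (B *v w) \<noteq> 0"
proof (rule ccontr)
  assume "\<not> ?thesis"
  then have z: "\<And>w. w \<bullet> (B *v w) = 0" by blast
  have uv: "u \<bullet> (B *v v) = 0" for u v
  proof -
    have "(u+v) \<bullet> (B *v (u+v)) = u \<bullet> (B *v u) + u \<bullet> (B *v v) + v \<bullet> (B *v u) + v \<bullet> (B *v v)"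
      by (simp add: matrix_vector_right_distrib inner_add_left inner_add_right)
    then show ?thesis using z[of "u+v"] z[of u] z[of v] sym_inner[OF assms(1), of u v] by simp
  qed
  have "B *v v = 0 *v v" for v using uv[of "B *v v" v] by simp
  then have "B = 0" using matrix_eq by blast
  then show False using assms(2) by simp
qed



lemma Q00: "Q M 0 0 v = v \<bullet> (M *v v)" unfolding Q_def by simp

lemma perturb_case:
  assumes symB: "symmetric_mat B" and Bnz: "B \<noteq> 0" and t: "0 < t" "t < 1" and e: "e > 0"
    and H0: "(y-x) \<bullet> (B *v (y-x)) = 0" and hne: "Q B b d x \<noteq> Q B b d y"
  shows "\<exists>z. Q B b d z = (1-t)*Q B b d x + t*Q B b d y \<and> Q A a c z \<le> (1-t)*Q A a c x + t*Q A a c y + e"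
proof -
  obtain w where w: "w \<bullet> (B *v w) \<noteq> 0" using exists_w[OF symB Bnz] by blast
  define hx where "hx = Q B b d x"
  define hy where "hy = Q B b d y"
  define fx where "fx = Q A a c x"
  define fy where "fy = Q A a c y"
  define D where "D = y - x"
  define p where "p = w \<bullet> (B *v y) + y \<bullet> (B *v w) + 2 * (b \<bullet> w)"
  define q where "q = w \<bullet> (B *v w)"
  define pf where "pf = w \<bullet> (A *v y) + y \<bullet> (A *v w) + 2 * (a \<bullet> w)"
  define qf where "qf = w \<bullet> (A *v w)"
  define c1 where "c1 = w \<bullet> (B *v D) + D \<bullet> (B *v w)"
  have hw: "\<And>\<epsilon>. Q B b d (y + \<epsilon> *\<^sub>R w) = hy + \<epsilon>*p + \<epsilon>^2*q"
    unfolding hy_def p_def q_def by (rule Q_expand)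
  have fw: "\<And>\<epsilon>. Q A a c (y + \<epsilon> *\<^sub>R w) = fy + \<epsilon>*pf + \<epsilon>^2*qf"
    unfolding fy_def pf_def qf_def by (rule Q_expand)
  have H2e: "(y + \<epsilon> *\<^sub>R w - x) \<bullet> (B *v (y + \<epsilon> *\<^sub>R w - x)) = \<epsilon>*(c1 + \<epsilon>*q)" for \<epsilon>
  proof -
    have "y + \<epsilon> *\<^sub>R w - x = D + \<epsilon> *\<^sub>R w" unfolding D_def by simp
    moreover have "Q B 0 0 (D + \<epsilon> *\<^sub>R w) = Q B 0 0 D + \<epsilon> * (w \<bullet> (B *v D) + D \<bullet> (B *v w) + 2 * (0 \<bullet> w)) + \<epsilon>^2 * (w \<bullet> (B *v w))"
      by (rule Q_expand)
    ultimately show ?thesis using H0 unfolding Q00 D_def c1_def q_def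
      by (simp add: algebra_simps power2_eq_square)
  qed
  have q0: "q \<noteq> 0" using w q_def by simp
  have hne': "hy - hx \<noteq> 0" using hne hx_def hy_def by simp
  define den where "den \<epsilon> = hy + \<epsilon>*p + \<epsilon>^2*q - hx" for \<epsilon>
  define te where "te \<epsilon> = t*(hy-hx)/den \<epsilon>" for \<epsilon>
  define ch where "ch \<epsilon> = (1 - te \<epsilon>)*fx + te \<epsilon>*(fy + \<epsilon>*pf + \<epsilon>^2*qf)" for \<epsilon>
  have ev1: "eventually (\<lambda>\<epsilon>::real. \<epsilon> \<noteq> 0) (at 0)" by (simp add: eventually_at_filter)
  have ev2: "eventually (\<lambda>\<epsilon>::real. c1 + \<epsilon>*q \<noteq> 0) (at 0)"
  proof (cases "c1 = 0")
    case True
    then show ?thesis using ev1 q0 by (auto elim: eventually_mono)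
  next
    case False
    have "((\<lambda>\<epsilon>::real. c1 + \<epsilon>*q) \<longlongrightarrow> c1) (at 0)" by (auto intro!: tendsto_eq_intros)
    then show ?thesis using False tendsto_imp_eventually_ne by blast
  qed
  have lden: "(den \<longlongrightarrow> hy - hx) (at 0)" unfolding den_def by (auto intro!: tendsto_eq_intros)
  have ev3: "eventually (\<lambda>\<epsilon>. den \<epsilon> \<noteq> 0) (at 0)" using tendsto_imp_eventually_ne[OF lden hne'] .
  have lte: "(te \<longlongrightarrow> t) (at 0)"
  proof -
    have "((\<lambda>\<epsilon>. t*(hy-hx)/den \<epsilon>) \<longlongrightarrow> t*(hy-hx)/(hy-hx)) (at 0)"
      by (rule tendsto_divide[OF tendsto_const lden hne'])
    then show ?thesis using hne' unfolding te_def by simp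
  qed
  have ev4: "eventually (\<lambda>\<epsilon>. te \<epsilon> > 0) (at 0)" using order_tendstoD(1)[OF lte t(1)] .
  have ev5: "eventually (\<lambda>\<epsilon>. te \<epsilon> < 1) (at 0)" using order_tendstoD(2)[OF lte t(2)] .
  have lch: "(ch \<longlongrightarrow> (1-t)*fx + t*(fy + 0*pf + 0^2*qf)) (at 0)"
    unfolding ch_def by (intro tendsto_intros lte)
  have ev6: "eventually (\<lambda>\<epsilon>. ch \<epsilon> < (1-t)*fx + t*fy + e) (at 0)"
    using order_tendstoD(2)[OF lch] e by simp
  have "eventually (\<lambda>\<epsilon>. \<epsilon> \<noteq> 0 \<and> c1 + \<epsilon>*q \<noteq> 0 \<and> den \<epsilon> \<noteq> 0 \<and> te \<epsilon> > 0 \<and> te \<epsilon> < 1 \<and> ch \<epsilon> < (1-t)*fx + t*fy + e) (at 0)"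
    by (intro eventually_conj ev1 ev2 ev3 ev4 ev5 ev6)
  then obtain \<epsilon> where ep: "\<epsilon> \<noteq> 0" "c1 + \<epsilon>*q \<noteq> 0" "den \<epsilon> \<noteq> 0" "te \<epsilon> > 0" "te \<epsilon> < 1"
     "ch \<epsilon> < (1-t)*fx + t*fy + e"
    using eventually_happens'[OF trivial_limit_at] by blast
  have cnd: "(y + \<epsilon> *\<^sub>R w - x) \<bullet> (B *v (y + \<epsilon> *\<^sub>R w - x)) \<noteq> 0" using H2e ep(1,2) by simp
  obtain z where z: "Q B b d z = (1 - te \<epsilon>) * Q B b d x + te \<epsilon> * Q B b d (y + \<epsilon> *\<^sub>R w)"
      "Q A a c z \<le> (1 - te \<epsilon>) * Q A a c x + te \<epsilon> * Q A a c (y + \<epsilon> *\<^sub>R w)"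
    using exact_conv[of "te \<epsilon>" "y + \<epsilon> *\<^sub>R w" x B A b d a c] ep(4,5) cnd by auto
  have "te \<epsilon> * den \<epsilon> = t*(hy-hx)" unfolding te_def using ep(3) by simp
  then have z1: "Q B b d z = (1-t)*hx + t*hy" using z(1) unfolding hw hx_def[symmetric] den_def
    by (simp add: algebra_simps)
  have z2: "Q A a c z \<le> (1-t)*fx + t*fy + e" using z(2) ep(6) unfolding fw fx_def[symmetric] ch_def
    by linarith
  show ?thesis unfolding hx_def[symmetric] hy_def[symmetric] fx_def[symmetric] fy_def[symmetric]
    by (intro exI[of _ z] conjI z1 z2)
qed




lemma quad_axis: "axis i 1 \<bullet> (P *v axis j 1) = P$i$j"
  by (simp add: inner_axis' matrix_vector_mult_basis column_def)

lemma sym_iff: "symmetric_mat M \<longleftrightarrow> (\<forall>i j. M$i$j = M$j$i)"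
  by (auto simp: symmetric_mat_def transpose_def vec_eq_iff)

lemma frob_add: "frob M (X + Y) = frob M X + frob M Y"
  by (simp add: frob_def algebra_simps sum.distrib)
lemma frob_diff: "frob M (X - Y) = frob M X - frob M Y"
  by (simp add: frob_def algebra_simps sum_subtractf)
lemma frob_scale: "frob M (r *\<^sub>R X) = r * frob M X"
  by (simp add: frob_def algebra_simps sum_distrib_left)
lemma frob_outer: "frob M (outer c c) = c \<bullet> (M *v c)"
  by (simp add: frob_def outer_def inner_vec_def matrix_vector_mult_def sum_distrib_left mult_ac)
lemma outer_mv: "outer c c *v x = (c \<bullet> x) *\<^sub>R c"
  by (simp add: vec_eq_iff outer_def inner_vec_def matrix_vector_mult_def sum_distrib_left mult_ac)

lemma psd_offdiag:
  assumes sym: "symmetric_mat P" and pos: "\<forall>x. 0 \<le> x \<bullet> (P *v x)" and kk: "P$k$k = 0"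
  shows "P$k$j = 0"
proof (rule ccontr)
  assume ne: "P$k$j \<noteq> 0"
  have sy: "P$j$k = P$k$j" using sym sym_iff by metis
  have "0 \<le> Q P 0 0 (axis j 1 + s *\<^sub>R axis k 1)" for s using pos by (simp add: Q00)
  then have "0 \<le> P$j$j + s*(P$k$j + P$j$k) + s^2 * P$k$k" for s
    unfolding Q_expand Q00 quad_axis by simp
  then have h: "0 \<le> P$j$j + 2 * s * P$k$j" for s using kk sy by (simp add: algebra_simps)
  define r where "r = -(P$j$j + 1)/(2*(P$k$j))"
  have "P$j$j + 2*r*(P$k$j) = -1" using ne unfolding r_def by (simp add: field_simps)
  then show False using h[of r] by linarith
qed

lemma frob_nonneg_aux:
  fixes M :: "real^'n^'n"
  assumes M: "\<forall>u. 0 \<le> u \<bullet> (M *v u)" and fin: "finite I"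
  shows "\<forall>P. symmetric_mat P \<and> (\<forall>x. 0 \<le> x \<bullet> (P *v x)) \<and> (\<forall>i j. (i \<notin> I \<or> j \<notin> I) \<longrightarrow> P$i$j = 0) \<longrightarrow> 0 \<le> frob M P"
  using fin
proof (induction I rule: finite_induct)
  case empty
  then show ?case by (auto simp: frob_def)
next
  case (insert k I)
  show ?case
  proof (intro allI impI, elim conjE)
    fix P :: "real^'n^'n"
    assume sym: "symmetric_mat P" and pos: "\<forall>x. 0 \<le> x \<bullet> (P *v x)"
      and supp: "\<forall>i j. (i \<notin> insert k I \<or> j \<notin> insert k I) \<longrightarrow> P$i$j = 0"
    have sy: "\<And>i j. P$i$j = P$j$i" using sym sym_iff by metis
    show "0 \<le> frob M P"
    proof (cases "P$k$k = 0")
      case True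
      have "\<forall>i j. (i \<notin> I \<or> j \<notin> I) \<longrightarrow> P$i$j = 0"
      proof (intro allI impI)
        fix i j assume ij: "i \<notin> I \<or> j \<notin> I"
        show "P$i$j = 0"
        proof (cases "i \<notin> insert k I \<or> j \<notin> insert k I")
          case True then show ?thesis using supp by blast
        next
          case False
          then have "i = k \<or> j = k" using ij by auto
          then show ?thesis using psd_offdiag[OF sym pos \<open>P$k$k = 0\<close>] sy by metis
        qed
      qed
      then show ?thesis using insert.IH sym pos by blast
    next
      case False
      have "0 \<le> P$k$k" using pos[rule_format, of "axis k 1"] by (simp add: quad_axis)
      then have pkk: "P$k$k > 0" using False by simp
      define c where "c = (\<chi> i. P$i$k)"
      define P' where "P' = P - (1/P$k$k) *\<^sub>R outer c c"
      have P'c: "P'$i$j = P$i$j - (1/P$k$k) * (P$i$k * P$j$k)" for i j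
        by (simp add: P'_def outer_def c_def)
      have sym': "symmetric_mat P'" unfolding sym_iff P'c using sy by (simp add: mult.commute)
      have Pc: "P *v axis k 1 = c" by (simp add: matrix_vector_mult_basis column_def c_def)
      have qP': "x \<bullet> (P' *v x) = x \<bullet> (P *v x) - (c \<bullet> x)^2 / P$k$k" for x
      proof -
        have "P' *v x = P *v x - (1/P$k$k) *\<^sub>R ((c \<bullet> x) *\<^sub>R c)"
          by (simp add: P'_def matrix_vector_mult_diff_rdistrib scaleR_matrix_vector_assoc[symmetric] outer_mv)
        then show ?thesis by (simp add: inner_diff_right power2_eq_square inner_commute)
      qed
      have pos': "\<forall>x. 0 \<le> x \<bullet> (P' *v x)"
      proof
        fix x
        define \<tau> where "\<tau> = (c \<bullet> x) / P$k$k"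
        have "0 \<le> Q P 0 0 (x + (-\<tau>) *\<^sub>R axis k 1)" using pos by (simp add: Q00)
        also have "\<dots> = x \<bullet> (P *v x) + (-\<tau>) * (axis k 1 \<bullet> (P *v x) + x \<bullet> (P *v axis k 1)) + \<tau>^2 * P$k$k"
          unfolding Q_expand Q00 quad_axis by simp
        also have "axis k 1 \<bullet> (P *v x) = x \<bullet> (P *v axis k 1)" using sym_inner sym by blast
        also have "x \<bullet> (P *v axis k 1) = c \<bullet> x" using Pc by (simp add: inner_commute)
        also have "x \<bullet> (P *v x) + - \<tau> * (c \<bullet> x + c \<bullet> x) + \<tau>\<^sup>2 * P $ k $ k = x \<bullet> (P *v x) - (c \<bullet> x)^2 / P$k$k"
          unfolding \<tau>_def using pkk by (simp add: field_simps power2_eq_square)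
        finally show "0 \<le> x \<bullet> (P' *v x)" using qP' by simp
      qed
      have supp': "\<forall>i j. (i \<notin> I \<or> j \<notin> I) \<longrightarrow> P'$i$j = 0"
      proof (intro allI impI)
        fix i j assume ij: "i \<notin> I \<or> j \<notin> I"
        have z: "\<And>i j. i \<notin> insert k I \<Longrightarrow> P$i$j = 0" "\<And>i j. j \<notin> insert k I \<Longrightarrow> P$i$j = 0" using supp by auto
        show "P'$i$j = 0"
        proof (cases "i = k")
          case True then show ?thesis unfolding P'c using pkk sy by simp
        next
          case ik: False
          show ?thesis
          proof (cases "j = k")
            case True then show ?thesis unfolding P'c using pkk sy by simp
          next
            case False
            then have "i \<notin> insert k I \<or> j \<notin> insert k I" using ij ik by auto
            then show ?thesis unfolding P'c using z by auto
          qed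
        qed
      qed
      have "P = P' + (1/P$k$k) *\<^sub>R outer c c" unfolding P'_def by simp
      then have "frob M P = frob M P' + (1/P$k$k) * (c \<bullet> (M *v c))"
        by (metis frob_add frob_scale frob_outer)
      moreover have "0 \<le> frob M P'" using insert.IH sym' pos' supp' by blast
      moreover have "0 \<le> (1/P$k$k) * (c \<bullet> (M *v c))" using pkk M by simp
      ultimately show ?thesis by linarith
    qed
  qed
qed

lemma frob_nonneg:
  fixes M P :: "real^'n^'n"
  assumes "\<forall>u. 0 \<le> u \<bullet> (M *v u)" "symmetric_mat P" "\<forall>x. 0 \<le> x \<bullet> (P *v x)"
  shows "0 \<le> frob M P"
  using frob_nonneg_aux[OF assms(1), of UNIV] assms(2,3) by simp



lemma approx_conv:
  assumes symB: "symmetric_mat B" and Bnz: "B \<noteq> 0" and t: "0 \<le> t" "t \<le> 1" and e: "e > 0"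
  shows "\<exists>z. Q B b d z = (1-t)*Q B b d x + t*Q B b d y \<and> Q A a c z \<le> (1-t)*Q A a c x + t*Q A a c y + e"
proof -
  consider (ex) "(y-x) \<bullet> (B *v (y-x)) \<noteq> 0 \<or> (y-x) \<bullet> (A *v (y-x)) \<ge> 0" | (t0) "t = 0" | (t1) "t = 1"
    | (eq) "Q B b d x = Q B b d y"
    | (pe) "(y-x) \<bullet> (B *v (y-x)) = 0" "0 < t" "t < 1" "Q B b d x \<noteq> Q B b d y"
    using t by linarith
  then show ?thesis
  proof cases
    case ex
    then obtain z where z: "Q B b d z = (1-t)*Q B b d x + t*Q B b d y" "Q A a c z \<le> (1-t)*Q A a c x + t*Q A a c y"
      using exact_conv[OF t, of y x B A b d a c] by blast
    have z2: "Q A a c z \<le> (1-t)*Q A a c x + t*Q A a c y + e" using z(2) e by linarith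
    show ?thesis by (intro exI[of _ z] conjI z(1) z2)
  next
    case t0 then show ?thesis using e by (intro exI[of _ x]) simp
  next
    case t1 then show ?thesis using e by (intro exI[of _ y]) simp
  next
    case eq
    have hh: "Q B b d x = (1-t)*Q B b d x + t*Q B b d y" "Q B b d y = (1-t)*Q B b d x + t*Q B b d y"
      using eq by (simp_all add: algebra_simps)
    show ?thesis
    proof (cases "Q A a c x \<le> Q A a c y")
      case True
      have "0 \<le> t * (Q A a c y - Q A a c x)" using True t by simp
      then have "Q A a c x \<le> (1-t)*Q A a c x + t*Q A a c y + e" using e by (simp add: algebra_simps)
      then show ?thesis by (intro exI[of _ x] conjI hh(1))
    next
      case False
      have "0 \<le> (1-t) * (Q A a c x - Q A a c y)" using False t by simp
      then have "Q A a c y \<le> (1-t)*Q A a c x + t*Q A a c y + e" using e by (simp add: algebra_simps)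
      then show ?thesis by (intro exI[of _ y] conjI hh(2))
    qed
  next
    case pe
    show ?thesis using perturb_case[OF symB Bnz pe(2,3) e pe(1,4)] by blast
  qed
qed

lemma core:
  fixes f h :: "'a \<Rightarrow> real"
  assumes conv: "\<And>x y t e. 0 \<le> t \<Longrightarrow> t \<le> 1 \<Longrightarrow> e > 0 \<Longrightarrow> \<exists>z. h z = (1-t)*h x + t*h y \<and> f z \<le> (1-t)*f x + t*f y + e"
    and bnd: "\<forall>x. \<alpha> \<le> h x \<and> h x \<le> \<beta> \<longrightarrow> L \<le> f x"
    and ab: "\<alpha> \<le> \<beta>"
    and nlo: "\<not>(\<forall>x. h x \<le> \<alpha>)" and nhi: "\<not>(\<forall>x. h x \<ge> \<beta>)"
  shows "\<exists>\<mu> L'. \<forall>x. L' \<le> f x + \<mu> * h x"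
proof -
  define S :: "(real\<times>real) set" where "S = {p. \<exists>x r. r > 0 \<and> p = (f x + r, h x)}"
  define K :: "(real\<times>real) set" where "K = {p. fst p < L \<and> \<alpha> \<le> snd p \<and> snd p \<le> \<beta>}"
  have cS: "convex S"
  proof (rule convexI)
    fix p1 p2 and u v :: real
    assume p1: "p1 \<in> S" and p2: "p2 \<in> S" and u: "0 \<le> u" and v: "0 \<le> v" and uv: "u + v = 1"
    obtain x r1 where x: "r1 > 0" "p1 = (f x + r1, h x)" using p1 S_def by blast
    obtain y r2 where y: "r2 > 0" "p2 = (f y + r2, h y)" using p2 S_def by blast
    have pos: "u * r1 + v * r2 > 0"
    proof (cases "u = 0")
      case True then show ?thesis using uv y by simp
    next
      case False then have "u * r1 > 0" using u x by simp
      moreover have "v * r2 \<ge> 0" using v y by simp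
      ultimately show ?thesis by linarith
    qed
    define e where "e = (u * r1 + v * r2)/2"
    have e: "e > 0" using pos e_def by simp
    have u1: "u = 1 - v" using uv by simp
    obtain z where z: "h z = (1-v)*h x + v * h y" "f z \<le> (1-v)*f x + v * f y + e"
      using conv[OF v _ e, of x y] uv u by auto
    define r where "r = u * (f x + r1) + v * (f y + r2) - f z"
    have fz: "f z \<le> u * f x + v * f y + e" using z(2) u1 by simp
    have "u * (f x + r1) + v * (f y + r2) = u * f x + v * f y + 2*e" unfolding e_def by (simp add: algebra_simps)
    then have r: "r > 0" using fz e unfolding r_def by linarith
    have hz: "h z = u * h x + v * h y" using z(1) u1 by simp
    have "u *\<^sub>R p1 + v *\<^sub>R p2 = (f z + r, h z)" unfolding x(2) y(2) hz r_def by (simp add: algebra_simps)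
    then show "u *\<^sub>R p1 + v *\<^sub>R p2 \<in> S" unfolding S_def using r by blast
  qed
  have cK: "convex K"
  proof (rule convexI)
    fix p1 p2 and u v :: real
    assume p1: "p1 \<in> K" and p2: "p2 \<in> K" and u: "0 \<le> u" and v: "0 \<le> v" and uv: "u + v = 1"
    have a1: "fst p1 < L" "\<alpha> \<le> snd p1" "snd p1 \<le> \<beta>" using p1 K_def by auto
    have a2: "fst p2 < L" "\<alpha> \<le> snd p2" "snd p2 \<le> \<beta>" using p2 K_def by auto
    have "u * fst p1 + v * fst p2 < L"
    proof (cases "u = 0")
      case True then show ?thesis using uv a2 by simp
    next
      case False
      then have "u * fst p1 < u * L" using u a1 by simp
      moreover have "v * fst p2 \<le> v * L" using v a2 by (simp add: mult_left_mono)
      ultimately show ?thesis using uv by (simp add: algebra_simps) (metis add_less_le_mono distrib_left mult.right_neutral)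
    qed
    moreover have "u * \<alpha> + v * \<alpha> \<le> u * snd p1 + v * snd p2"
      using a1 a2 u v by (intro add_mono mult_left_mono) auto
    moreover have "u * snd p1 + v * snd p2 \<le> u * \<beta> + v * \<beta>"
      using a1 a2 u v by (intro add_mono mult_left_mono) auto
    ultimately show "u *\<^sub>R p1 + v *\<^sub>R p2 \<in> K" unfolding K_def using uv
      by (simp add: distrib_right[symmetric])
  qed
  have neS: "S \<noteq> {}" unfolding S_def by (auto intro: exI[of _ "1::real"])
  have neK: "(L - 1, \<alpha>) \<in> K" "(L - 1, \<beta>) \<in> K" unfolding K_def using ab by auto
  have dis: "S \<inter> K = {}"
  proof (rule ccontr)
    assume "S \<inter> K \<noteq> {}"
    then obtain x r where "r > 0" "(f x + r, h x) \<in> K" unfolding S_def by blast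
    then show False using bnd unfolding K_def by force
  qed
  obtain w b0 where w: "w \<noteq> 0" "\<forall>p\<in>S. w \<bullet> p \<le> b0" "\<forall>p\<in>K. w \<bullet> p \<ge> b0"
    using separating_hyperplane_sets[OF cS cK neS _ dis] neK by blast
  obtain p q where pq: "w = (p, q)" by (cases w)
  have hS: "p*(f x + r) + q*h x \<le> b0" if "r > 0" for x r
    using w(2) that pq unfolding S_def by auto
  have hK: "p * u + q * v \<ge> b0" if "u < L" "\<alpha> \<le> v" "v \<le> \<beta>" for u v
    using w(3) that pq unfolding K_def by auto
  have p0: "p \<le> 0"
  proof (rule ccontr)
    assume "\<not> p \<le> 0"
    then have pp: "p > 0" by simp
    define r where "r = \<bar>b0 - p*f undefined - q*h undefined\<bar>/p + 1"
    have "\<bar>b0 - p*f undefined - q*h undefined\<bar>/p \<ge> 0" using pp by simp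
    then have r: "r > 0" unfolding r_def by linarith
    have "p*r = \<bar>b0 - p*f undefined - q*h undefined\<bar> + p" unfolding r_def using pp by (simp add: field_simps)
    then have "p*(f undefined + r) + q*h undefined > b0" using pp by (simp add: algebra_simps)
    then show False using hS[OF r, of undefined] by linarith
  qed
  show ?thesis
  proof (cases "p = 0")
    case False
    then have pn: "p < 0" using p0 by simp
    have "b0/p - 1 \<le> f x + (q/p) * h x" for x
    proof -
      have "p*(f x + 1 + (q/p) * h x) \<le> b0" using hS[of 1 x] pn by (simp add: algebra_simps)
      then have "b0/p \<le> f x + 1 + (q/p) * h x" using pn by (simp add: neg_divide_le_eq mult.commute)
      then show ?thesis by simp
    qed
    then show ?thesis by blast
  next
    case True
    then have q0: "q \<noteq> 0" using w(1) pq by (auto simp: zero_prod_def)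
    have qa: "q*\<alpha> \<ge> b0" "q*\<beta> \<ge> b0" using hK[of "L-1" \<alpha>] hK[of "L-1" \<beta>] ab True by auto
    have qh: "q*h x \<le> b0" for x using hS[of 1 x] True by simp
    show ?thesis
    proof (cases "q > 0")
      case True
      have "h x \<le> \<alpha>" for x
      proof -
        have "q * h x \<le> q * \<alpha>" using qh[of x] qa(1) by linarith
        then show ?thesis using True by (simp add: mult_le_cancel_left_pos)
      qed
      then show ?thesis using nlo by blast
    next
      case False
      then have qn: "q < 0" using q0 by simp
      have "h x \<ge> \<beta>" for x
      proof -
        have "q * h x \<le> q * \<beta>" using qh[of x] qa(2) by linarith
        then show ?thesis using qn by (simp add: mult_le_cancel_left_neg)
      qed
      then show ?thesis using nhi by blast
    qed
  qed
qed



lemma quad_lead: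
  fixes a b c :: real
  assumes h: "\<And>l. 0 \<le> a*l^2 + b*l + c"
  shows "0 \<le> a"
proof (rule ccontr)
  assume "\<not> 0 \<le> a"
  then have a: "a < 0" by simp
  define l where "l = max 1 ((\<bar>b\<bar> + \<bar>c\<bar> + 1)/(-a))"
  have l1: "l \<ge> 1" unfolding l_def by simp
  have l2: "l \<ge> (\<bar>b\<bar> + \<bar>c\<bar> + 1)/(-a)" unfolding l_def by simp
  have "(-a)*l \<ge> (-a)*((\<bar>b\<bar> + \<bar>c\<bar> + 1)/(-a))" using l2 a by (intro mult_left_mono) auto
  moreover have "(-a)*((\<bar>b\<bar> + \<bar>c\<bar> + 1)/(-a)) = \<bar>b\<bar> + \<bar>c\<bar> + 1" using a by simp
  ultimately have al: "a*l \<le> -(\<bar>b\<bar> + \<bar>c\<bar> + 1)" by linarith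
  have "l*(a*l) \<le> l*(-(\<bar>b\<bar> + \<bar>c\<bar> + 1))" using al l1 by (simp add: mult_left_mono)
  then have t1: "a*l^2 \<le> -l*\<bar>b\<bar> - l*\<bar>c\<bar> - l" by (simp add: power2_eq_square algebra_simps)
  have t2: "b*l \<le> \<bar>b\<bar>*l" using l1 by (simp add: mult_right_mono)
  have t3: "c \<le> \<bar>c\<bar>*l" using l1 by (metis abs_ge_self abs_ge_zero mult.right_neutral mult_left_mono order_trans)
  have "a*l^2 + b*l + c \<le> -l" using t1 t2 t3 by (simp add: algebra_simps)
  then show False using h[of l] l1 by linarith
qed

lemma sumopt: "(\<Sum>i\<in>(UNIV::'n::finite option set). g i) = g None + (\<Sum>i\<in>UNIV. g (Some i))"
proof -
  have "(\<Sum>i\<in>(UNIV::'n option set). g i) = (\<Sum>i\<in>insert None (range Some). g i)"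
    by (simp add: UNIV_option_conv)
  also have "\<dots> = g None + (\<Sum>i\<in>range Some. g i)" by (subst sum.insert) auto
  also have "(\<Sum>i\<in>range Some. g i) = (\<Sum>i\<in>UNIV. g (Some i))" by (subst sum.reindex) (auto simp: inj_on_def)
  finally show ?thesis .
qed

lemma block_quad:
  fixes y :: "real^('n::finite option)"
  shows "y \<bullet> (block_mat M m s *v y) = (\<chi> i. y$Some i) \<bullet> (M *v (\<chi> i. y$Some i)) + 2*(y$None)*(m \<bullet> (\<chi> i. y$Some i)) + s*(y$None)^2"
proof -
  define x where "x = (\<chi> i. y$Some i)"
  define t where "t = y$None"
  have e1: "(block_mat M m s *v y) $ None = s*t + m \<bullet> x"
    by (simp add: matrix_vector_mult_def sumopt block_mat_def inner_vec_def x_def t_def mult.commute)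
  have e2: "(block_mat M m s *v y) $ Some i = (M *v x)$i + m$i * t" for i
    by (simp add: matrix_vector_mult_def sumopt block_mat_def x_def t_def mult.commute)
  have "y \<bullet> (block_mat M m s *v y) = t * (s*t + m \<bullet> x) + (\<Sum>i\<in>UNIV. x$i * ((M *v x)$i + m$i * t))"
    by (simp add: inner_vec_def sumopt e1 e2 x_def t_def)
  also have "\<dots> = x \<bullet> (M *v x) + 2*t*(m \<bullet> x) + s*t^2"
    by (simp add: inner_vec_def algebra_simps sum.distrib sum_distrib_left power2_eq_square)
  finally show ?thesis unfolding x_def t_def .
qed

lemma block_psd_iff:
  assumes sym: "symmetric_mat M"
  shows "psd (block_mat M m s) \<longleftrightarrow> (\<forall>x. 0 \<le> x \<bullet> (M *v x) + 2*(m \<bullet> x) + s)"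
proof
  assume "psd (block_mat M m s)"
  then have p: "\<forall>y. 0 \<le> y \<bullet> (block_mat M m s *v y)" unfolding psd_def by blast
  show "\<forall>x. 0 \<le> x \<bullet> (M *v x) + 2*(m \<bullet> x) + s"
  proof
    fix x :: "real^'a"
    define y :: "real^('a option)" where "y = (\<chi> I. case I of None \<Rightarrow> 1 | Some i \<Rightarrow> x$i)"
    have "(\<chi> i. y$Some i) = x" "y$None = 1" unfolding y_def by (simp_all add: vec_eq_iff)
    then show "0 \<le> x \<bullet> (M *v x) + 2*(m \<bullet> x) + s" using p[rule_format, of y] block_quad[of y M m s] by simp
  qed
next
  assume q: "\<forall>x. 0 \<le> x \<bullet> (M *v x) + 2*(m \<bullet> x) + s"
  have sy: "\<And>i j. M$i$j = M$j$i" using sym sym_iff by metis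
  have "symmetric_mat (block_mat M m s)" unfolding sym_iff
  proof (intro allI)
    fix I J :: "'a option"
    show "block_mat M m s $ I $ J = block_mat M m s $ J $ I"
      by (cases I; cases J) (simp_all add: block_mat_def sy)
  qed
  moreover have "0 \<le> y \<bullet> (block_mat M m s *v y)" for y
  proof -
    define x where "x = (\<chi> i. y$Some i)"
    define t where "t = y$None"
    have "0 \<le> x \<bullet> (M *v x) + 2*t*(m \<bullet> x) + s*t^2"
    proof (cases "t = 0")
      case True
      have "0 \<le> (x \<bullet> (M *v x))*l^2 + (2*(m \<bullet> x))*l + s" for l
        using q[rule_format, of "l *\<^sub>R x"] by (simp add: matrix_vector_mult_scaleR power2_eq_square algebra_simps)
      then have "0 \<le> x \<bullet> (M *v x)" by (rule quad_lead)
      then show ?thesis using True by simp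
    next
      case False
      have "0 \<le> ((1/t) *\<^sub>R x) \<bullet> (M *v ((1/t) *\<^sub>R x)) + 2*(m \<bullet> ((1/t) *\<^sub>R x)) + s" using q by blast
      also have "\<dots> = (x \<bullet> (M *v x) + 2*t*(m \<bullet> x) + s*t^2) / t^2"
        using False by (simp add: matrix_vector_mult_scaleR field_simps power2_eq_square)
      finally show ?thesis using False by (simp add: zero_le_divide_iff)
    qed
    then show ?thesis using block_quad[of y M m s] unfolding x_def t_def by simp
  qed
  ultimately show "psd (block_mat M m s)" unfolding psd_def by blast
qed

lemma frob_neg: "frob (-M) X = - frob M X"
  by (simp add: frob_def sum_negf)

lemma mv_neg:
  fixes M :: "real^'n^'m"
  shows "(-M) *v x = - (M *v x)"
proof -
  have "(0 - M) *v x = 0 *v x - M *v x" by (rule matrix_vector_mult_diff_rdistrib)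
  then show ?thesis by simp
qed

lemma Q_scale: "Q B b d (l *\<^sub>R u) = (u \<bullet> (B *v u))*l^2 + (2*(b \<bullet> u))*l + d"
  using Q_expand[of B b d 0 l u] by (simp add: Q_def algebra_simps)

lemma slater_conseq:
  assumes symX: "symmetric_mat Xh" and pdP: "pd (Xh - outer xh xh)"
    and lo: "\<alpha> < frob B Xh + 2*(b \<bullet> xh) + d" and hi: "frob B Xh + 2*(b \<bullet> xh) + d < \<beta>"
  shows "\<not>(\<forall>x. Q B b d x \<le> \<alpha>)" "\<not>(\<forall>x. Q B b d x \<ge> \<beta>)"
proof -
  define P where "P = Xh - outer xh xh"
  have symP: "symmetric_mat P" and posP: "\<forall>x. 0 \<le> x \<bullet> (P *v x)"
    using pdP unfolding P_def pd_def by (auto, metis inner_zero_left less_eq_real_def matrix_vector_mult_0_right)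
  have v: "frob B Xh + 2*(b \<bullet> xh) + d = Q B b d xh + frob B P"
  proof -
    have "Xh = P + outer xh xh" unfolding P_def by simp
    then have "frob B Xh = frob B P + xh \<bullet> (B *v xh)" by (metis frob_add frob_outer)
    then show ?thesis unfolding Q_def by simp
  qed
  show "\<not>(\<forall>x. Q B b d x \<le> \<alpha>)"
  proof
    assume all: "\<forall>x. Q B b d x \<le> \<alpha>"
    have "\<forall>u. 0 \<le> u \<bullet> ((-B) *v u)"
    proof
      fix u
      have "0 \<le> (-(u \<bullet> (B *v u)))*l^2 + (-(2*(b \<bullet> u)))*l + (\<alpha> - d)" for l
        using all[rule_format, of "l *\<^sub>R u"] unfolding Q_scale by simp
      then have "0 \<le> -(u \<bullet> (B *v u))" by (rule quad_lead)
      then show "0 \<le> u \<bullet> ((-B) *v u)" by (simp add: mv_neg)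
    qed
    then have "0 \<le> frob (-B) P" using frob_nonneg symP posP by blast
    then have "frob B P \<le> 0" by (simp add: frob_neg)
    then show False using v lo all[rule_format, of xh] by linarith
  qed
  show "\<not>(\<forall>x. Q B b d x \<ge> \<beta>)"
  proof
    assume all: "\<forall>x. Q B b d x \<ge> \<beta>"
    have "\<forall>u. 0 \<le> u \<bullet> (B *v u)"
    proof
      fix u
      have "0 \<le> (u \<bullet> (B *v u))*l^2 + (2*(b \<bullet> u))*l + (d - \<beta>)" for l
        using all[rule_format, of "l *\<^sub>R u"] unfolding Q_scale by simp
      then show "0 \<le> u \<bullet> (B *v u)" by (rule quad_lead)
    qed
    then have "0 \<le> frob B P" using frob_nonneg symP posP by blast
    then show False using v hi all[rule_format, of xh] by linarith
  qed
qed

theorem corollary1: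
  fixes A B :: "real^'n^'n" and a b :: "real^'n" and c d \<alpha> \<beta> :: real
    and f h :: "real^'n \<Rightarrow> real"
  assumes symA: "symmetric_mat A" and symB: "symmetric_mat B"
    and \<alpha>\<beta>: "\<alpha> \<le> \<beta>"
    and f_def: "\<And>x. f x = x \<bullet> (A *v x) + 2 * (a \<bullet> x) + c"
    and h_def: "\<And>x. h x = x \<bullet> (B *v x) + 2 * (b \<bullet> x) + d"
    and B_nz: "B \<noteq> 0"
    and slater: "\<exists>xh Xh. symmetric_mat Xh \<and> pd (Xh - outer xh xh) \<and>
                   \<alpha> < frob B Xh + 2 * (b \<bullet> xh) + d \<and> frob B Xh + 2 * (b \<bullet> xh) + d < \<beta>"
  shows "(\<exists>L. \<forall>x. \<alpha> \<le> h x \<and> h x \<le> \<beta> \<longrightarrow> L \<le> f x) \<longleftrightarrow>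
         (\<exists>\<mu> s. psd (block_mat (A + \<mu> *\<^sub>R B) (a + \<mu> *\<^sub>R b) s))"
proof -
  have fQ: "f = Q A a c" by (rule ext) (simp add: f_def Q_def)
  have hQ: "h = Q B b d" by (rule ext) (simp add: h_def Q_def)
  have symAB: "symmetric_mat (A + \<mu> *\<^sub>R B)" for \<mu>
    using symA symB unfolding sym_iff by simp
  have expr: "x \<bullet> ((A + \<mu> *\<^sub>R B) *v x) + 2*((a + \<mu> *\<^sub>R b) \<bullet> x) + s = f x + \<mu> * h x - c - \<mu> * d + s" for x \<mu> s
    by (simp add: f_def h_def matrix_vector_mult_add_rdistrib scaleR_matrix_vector_assoc[symmetric]
        inner_add_right inner_add_left algebra_simps)
  show ?thesis
  proof
    assume "\<exists>L. \<forall>x. \<alpha> \<le> h x \<and> h x \<le> \<beta> \<longrightarrow> L \<le> f x"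
    then obtain L where L: "\<forall>x. \<alpha> \<le> h x \<and> h x \<le> \<beta> \<longrightarrow> L \<le> f x" by blast
    obtain xh Xh where sl: "symmetric_mat Xh" "pd (Xh - outer xh xh)"
      "\<alpha> < frob B Xh + 2 * (b \<bullet> xh) + d" "frob B Xh + 2 * (b \<bullet> xh) + d < \<beta>"
      using slater by blast
    have conv: "\<exists>z. h z = (1-t)*h x + t*h y \<and> f z \<le> (1-t)*f x + t*f y + e"
      if "0 \<le> t" "t \<le> 1" "e > 0" for x y t e
      unfolding fQ hQ using approx_conv[OF symB B_nz that] by blast
    obtain \<mu> L' where ml: "\<forall>x. L' \<le> f x + \<mu> * h x"
      using core[OF conv L \<alpha>\<beta>] slater_conseq[OF sl] unfolding hQ by blast
    have "\<forall>x. 0 \<le> x \<bullet> ((A + \<mu> *\<^sub>R B) *v x) + 2*((a + \<mu> *\<^sub>R b) \<bullet> x) + (c + \<mu>*d - L')"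
      using ml unfolding expr by (simp add: algebra_simps)
    then show "\<exists>\<mu> s. psd (block_mat (A + \<mu> *\<^sub>R B) (a + \<mu> *\<^sub>R b) s)"
      using block_psd_iff[OF symAB] by blast
  next
    assume "\<exists>\<mu> s. psd (block_mat (A + \<mu> *\<^sub>R B) (a + \<mu> *\<^sub>R b) s)"
    then obtain \<mu> s where "psd (block_mat (A + \<mu> *\<^sub>R B) (a + \<mu> *\<^sub>R b) s)" by blast
    then have q: "\<forall>x. 0 \<le> f x + \<mu> * h x - c - \<mu> * d + s"
      using block_psd_iff[OF symAB] expr by metis
    have "\<forall>x. \<alpha> \<le> h x \<and> h x \<le> \<beta> \<longrightarrow> c + \<mu>*d - s - \<bar>\<mu>\<bar>*(\<bar>\<alpha>\<bar> + \<bar>\<beta>\<bar>) \<le> f x"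
    proof (intro allI impI)
      fix x assume hx: "\<alpha> \<le> h x \<and> h x \<le> \<beta>"
      have "\<bar>h x\<bar> \<le> \<bar>\<alpha>\<bar> + \<bar>\<beta>\<bar>" using hx by linarith
      then have "\<bar>\<mu> * h x\<bar> \<le> \<bar>\<mu>\<bar>*(\<bar>\<alpha>\<bar> + \<bar>\<beta>\<bar>)" by (simp add: abs_mult mult_left_mono)
      then have "\<mu> * h x \<le> \<bar>\<mu>\<bar>*(\<bar>\<alpha>\<bar> + \<bar>\<beta>\<bar>)" by linarith
      then show "c + \<mu>*d - s - \<bar>\<mu>\<bar>*(\<bar>\<alpha>\<bar> + \<bar>\<beta>\<bar>) \<le> f x" using q[rule_format, of x] by linarith
    qed
    then show "\<exists>L. \<forall>x. \<alpha> \<le> h x \<and> h x \<le> \<beta> \<longrightarrow> L \<le> f x" by blast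
  qed
qed


end
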